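(* Let $I$ be a homogeneous tropical ideal in $\overline{\mathbb R}[x_0,\dots,x_n]$ and let $\prec$ be a monomial term order. There is a nonempty polyhedron $C_\prec\subseteq\mathbb R^{n+1}$ with $(n+1)$-dimensional recession cone such that $\operatorname{in}_{\mathbf w}(I)=\operatorname{in}_\prec(I)$ for all $\mathbf w$ in the interior of $C_\prec$.
   Context: $\overline{\mathbb R}=(\mathbb R\cup\{\infty\},\min,+)$, $\mathbb B=\{0,\infty\}$. A homogeneous tropical ideal is a homogeneous ideal $I$ such that for homogeneous $f,g\in I$ of equal degree and a monomial $\mathbf x^{\mathbf u}$ with equal coefficients $[f]_{\mathbf x^{\mathbf u}}=[g]_{\mathbf x^{\mathbf u}}\ne\infty$ there is $h\in I$ with $[h]_{\mathbf x^{\mathbf u}}=\infty$ and $[h]_{\mathbf x^{\mathbf v}}\ge\min([f]_{\mathbf x^{\mathbf v}},[g]_{\mathbf x^{\mathbf v}})$ for all $\mathbf v$, with equality when $[f]_{\mathbf x^{\mathbf v}}\ne[g]_{\mathbf x^{\mathbf v}}$. A monomial term order is a total order $\prec$ on monomials such that $\mathbf x^{\mathbf u}\prec\mathbf x^{\mathbf u'}$ implies $\mathbf x^{\mathbf u+\mathbf v}\prec\mathbf x^{\mathbf u'+\mathbf v}$ for all $\mathbf v$, and $\mathbf x^{\mathbf u}\prec\mathbf x^{\mathbf 0}$ for all $\mathbf u\ne\mathbf 0$. $\operatorname{in}_\prec(f)$ is the $\prec$-smallest monomial with non-$\infty$ coefficient in $f$, and $\operatorname{in}_\prec(I)$ is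 the monomial ideal of $\mathbb B[x_0,\dots,x_n]$ generated by $\{\operatorname{in}_\prec(f):f\in I\}$. For $\mathbf w\in\mathbb R^{n+1}$, $\operatorname{in}_{\mathbf w}(f)=\bigoplus_{\mathbf u:[f]_{\mathbf x^{\mathbf u}}+\mathbf u\cdot\mathbf w=\min_{\mathbf u'}([f]_{\mathbf x^{\mathbf u'}}+\mathbf u'\cdot\mathbf w)}\mathbf x^{\mathbf u}$ and $\operatorname{in}_{\mathbf w}(I)=\{\operatorname{in}_{\mathbf w}(f):f\in I\}$. The recession cone of a polyhedron $P$ is the largest cone $C$ with $P+C\subseteq P$. *)

theory Defs
  imports "HOL-Analysis.Analysis"
begin

(* Exponent vectors of monomials in the variables indexed by the finite type 'n
   (|'n| = n+1 variables x_0..x_n). *)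
type_synonym 'n expo = "'n \<Rightarrow> nat"

(* Tropical polynomials over (R \<union> {\<infinity>}, min, +): coefficient functions into ereal,
   never -\<infinity>, finitely many non-\<infinity> coefficients.  \<infinity> plays the role of tropical zero. *)
type_synonym 'n tpoly = "'n expo \<Rightarrow> ereal"

definition is_tpoly :: "'n tpoly \<Rightarrow> bool" where
  "is_tpoly f \<longleftrightarrow> (\<forall>u. f u \<noteq> -\<infinity>) \<and> finite {u. f u \<noteq> \<infinity>}"

definition tdeg :: "'n::finite expo \<Rightarrow> nat" where
  "tdeg u = (\<Sum>i\<in>UNIV. u i)"

definition homog_of_deg :: "nat \<Rightarrow> 'n::finite tpoly \<Rightarrow> bool" where
  "homog_of_deg d f \<longleftrightarrow> (\<forall>u. f u \<noteq> \<infinity> \<longrightarrow> tdeg u = d)"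

definition homog :: "'n::finite tpoly \<Rightarrow> bool" where
  "homog f \<longleftrightarrow> (\<exists>d. homog_of_deg d f)"

definition tadd :: "'n tpoly \<Rightarrow> 'n tpoly \<Rightarrow> 'n tpoly" where
  "tadd f g = (\<lambda>u. min (f u) (g u))"

definition tmult :: "'n tpoly \<Rightarrow> 'n tpoly \<Rightarrow> 'n tpoly" where
  "tmult f g = (\<lambda>u. INF p\<in>{(v, w). (\<lambda>i. v i + w i) = u}. f (fst p) + g (snd p))"

definition hcomp :: "nat \<Rightarrow> 'n::finite tpoly \<Rightarrow> 'n tpoly" where
  "hcomp d f = (\<lambda>u. if tdeg u = d then f u else \<infinity>)"

definition tideal :: "'n tpoly set \<Rightarrow> bool" where
  "tideal I \<longleftrightarrow> I \<noteq> {} \<and> (\<forall>f\<in>I. is_tpoly f)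
     \<and> (\<forall>f\<in>I. \<forall>g\<in>I. tadd f g \<in> I)
     \<and> (\<forall>f\<in>I. \<forall>g. is_tpoly g \<longrightarrow> tmult g f \<in> I)"

(* homogeneous ideal: contains all homogeneous components of its elements
   (equivalently: generated by homogeneous polynomials) *)
definition homog_ideal :: "'n::finite tpoly set \<Rightarrow> bool" where
  "homog_ideal I \<longleftrightarrow> tideal I \<and> (\<forall>f\<in>I. \<forall>d. hcomp d f \<in> I)"

definition homog_tropical_ideal :: "'n::finite tpoly set \<Rightarrow> bool" where
  "homog_tropical_ideal I \<longleftrightarrow> homog_ideal I \<and>
    (\<forall>f\<in>I. \<forall>g\<in>I. \<forall>d u. homog_of_deg d f \<and> homog_of_deg d g \<and> f u = g u \<and> f u \<noteq> \<infinity> \<longrightarrow>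
       (\<exists>h\<in>I. h u = \<infinity> \<and> (\<forall>v. h v \<ge> min (f v) (g v) \<and> (f v \<noteq> g v \<longrightarrow> h v = min (f v) (g v)))))"

(* monomial term order, given as strict relation prec u v  meaning  x^u \<prec> x^v *)
definition monomial_term_order :: "('n expo \<Rightarrow> 'n expo \<Rightarrow> bool) \<Rightarrow> bool" where
  "monomial_term_order prec \<longleftrightarrow>
     (\<forall>u. \<not> prec u u) \<and> (\<forall>u v w. prec u v \<longrightarrow> prec v w \<longrightarrow> prec u w)
     \<and> (\<forall>u v. u \<noteq> v \<longrightarrow> prec u v \<or> prec v u)
     \<and> (\<forall>u u' v. prec u u' \<longrightarrow> prec (\<lambda>i. u i + v i) (\<lambda>i. u' i + v i))
     \<and> (\<forall>u. u \<noteq> (\<lambda>i. 0) \<longrightarrow> prec u (\<lambda>i. 0))"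

(* polynomials over B = {0,\<infinity>} represented by their (finite) set of monomials with coefficient 0 *)
type_synonym 'n bpoly = "'n expo set"

definition init_prec :: "('n expo \<Rightarrow> 'n expo \<Rightarrow> bool) \<Rightarrow> 'n tpoly \<Rightarrow> 'n expo" where
  "init_prec prec f = (THE u. f u \<noteq> \<infinity> \<and> (\<forall>v. f v \<noteq> \<infinity> \<longrightarrow> v \<noteq> u \<longrightarrow> prec u v))"

(* monomial ideal of B[x] generated by {in_prec f : f \<in> I} (f with some non-\<infinity> coefficient):
   a B-polynomial lies in it iff each of its monomials is divisible by a generator *)
definition init_prec_ideal :: "('n expo \<Rightarrow> 'n expo \<Rightarrow> bool) \<Rightarrow> 'n tpoly set \<Rightarrow> 'n bpoly set" where
  "init_prec_ideal prec I = {S. finite S \<and>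
      (\<forall>v\<in>S. \<exists>f\<in>I. (\<exists>u. f u \<noteq> \<infinity>) \<and> (\<forall>i. init_prec prec f i \<le> v i))}"

definition wdot :: "'n::finite expo \<Rightarrow> real^'n \<Rightarrow> real" where
  "wdot u w = (\<Sum>i\<in>UNIV. real (u i) * w $ i)"

definition init_w :: "real^'n::finite \<Rightarrow> 'n tpoly \<Rightarrow> 'n bpoly" where
  "init_w w f = {u. f u \<noteq> \<infinity> \<and> (\<forall>u'. f u + ereal (wdot u w) \<le> f u' + ereal (wdot u' w))}"

definition init_w_ideal :: "real^'n::finite \<Rightarrow> 'n tpoly set \<Rightarrow> 'n bpoly set" where
  "init_w_ideal w I = init_w w ` I"

definition recession_cone :: "'a::real_vector set \<Rightarrow> 'a set" where
  "recession_cone P = \<Union>{C. cone C \<and> (\<forall>x\<in>P. \<forall>c\<in>C. x + c \<in> P)}"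

end

theory Submission
  imports Defs "HOL-Library.Function_Algebras"
begin

lemma INF_inf: "(\<forall>x\<in>A. F x = (\<infinity>::ereal)) \<Longrightarrow> (INF x\<in>A. F x) = \<infinity>"
  using INF_top_conv[of F A] by (simp add: top_ereal_def)

definition zpoly :: "'n tpoly" where "zpoly = (\<lambda>u. \<infinity>)"
definition mono :: "real \<Rightarrow> 'n expo \<Rightarrow> 'n tpoly" where
  "mono c a = (\<lambda>u. if u = a then ereal c else \<infinity>)"

lemma is_tpoly_zpoly: "is_tpoly zpoly" by (simp add: is_tpoly_def zpoly_def)
lemma is_tpoly_mono: "is_tpoly (mono c a)"
proof -
  have "{u. mono c a u \<noteq> \<infinity>} \<subseteq> {a}" by (auto simp: mono_def)
  then show ?thesis by (auto simp: is_tpoly_def mono_def intro: finite_subset)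
qed

lemma tmult_zpoly: assumes "is_tpoly f" shows "tmult zpoly f = zpoly"
proof -
  have "\<And>x. f x \<noteq> -\<infinity>" using assms by (simp add: is_tpoly_def)
  then show ?thesis unfolding tmult_def zpoly_def by (intro ext INF_inf) simp
qed

lemma tmult_mono:
  fixes g :: "'n tpoly"
  assumes "is_tpoly g"
  shows "tmult (mono c a) g x = (if a \<le> x then ereal c + g (x - a) else \<infinity>)"
proof -
  have ng: "\<And>x. g x \<noteq> -\<infinity>" using assms by (simp add: is_tpoly_def)
  let ?A = "{(v, w). (\<lambda>i. v i + w i) = x}"
  let ?F = "\<lambda>p. mono c a (fst p) + g (snd p)"
  show ?thesis
  proof (cases "a \<le> x")
    case True
    have mem: "(a, x - a) \<in> ?A" using True by (auto simp: le_fun_def fun_eq_iff)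
    have low: "ereal c + g (x - a) \<le> ?F p" if "p \<in> ?A" for p
    proof (cases "fst p = a")
      case True
      obtain v w where p: "p = (v, w)" by (cases p)
      have e: "(\<lambda>i. v i + w i) = x" using that p by simp
      have va: "v = a" using True p by simp
      have "\<And>i. a i + w i = x i" using fun_cong[OF e] va by simp
      then have "w = x - a" by (simp add: fun_eq_iff) (metis add_diff_cancel_left')
      then have "snd p = x - a" using p by simp
      with True show ?thesis by (simp add: mono_def)
    next
      case False
      then show ?thesis using ng by (simp add: mono_def)
    qed
    have "(INF p\<in>?A. ?F p) = ereal c + g (x - a)"
    proof (rule antisym)
      show "(INF p\<in>?A. ?F p) \<le> ereal c + g (x - a)"
        using INF_lower[OF mem, of ?F] by (simp add: mono_def)
      show "ereal c + g (x - a) \<le> (INF p\<in>?A. ?F p)"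
        by (rule INF_greatest) (use low in auto)
    qed
    then show ?thesis using True by (simp add: tmult_def)
  next
    case False
    have "?F p = \<infinity>" if "p \<in> ?A" for p
    proof (cases "fst p = a")
      case True
      obtain v w where p: "p = (v, w)" by (cases p)
      have e: "(\<lambda>i. v i + w i) = x" using that p by simp
      have va: "v = a" using True p by simp
      have "\<And>i. a i \<le> x i" using fun_cong[OF e] va by (metis le_add1)
      then have "a \<le> x" by (simp add: le_fun_def)
      with False show ?thesis by simp
    next
      case False
      then show ?thesis using ng by (simp add: mono_def)
    qed
    then have "(INF p\<in>?A. ?F p) = \<infinity>" by (intro INF_inf) blast
    then show ?thesis using False by (simp add: tmult_def)
  qed
qed



locale tctx =
  fixes I :: "('n::finite) tpoly set" and prec :: "'n expo \<Rightarrow> 'n expo \<Rightarrow> bool"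
  assumes trop: "homog_tropical_ideal I" and mto: "monomial_term_order prec"
begin

lemma mto_irr: shows "\<not> prec u u"
proof -
  have "\<forall>u. \<not> prec u u" using mto unfolding monomial_term_order_def by (elim conjE) assumption
  then show ?thesis by blast
qed
lemma mto_trans: assumes "prec u v" "prec v w" shows "prec u w"
proof -
  have "\<forall>u v w. prec u v \<longrightarrow> prec v w \<longrightarrow> prec u w" using mto unfolding monomial_term_order_def by (elim conjE) assumption
  then show ?thesis using assms(1,2) by blast
qed
lemma mto_tot: assumes "u \<noteq> v" shows "prec u v \<or> prec v u"
proof -
  have "\<forall>u v. u \<noteq> v \<longrightarrow> prec u v \<or> prec v u" using mto unfolding monomial_term_order_def by (elim conjE) assumption
  then show ?thesis using assms(1) by blast
qed
lemma mto_mult: assumes "prec u u'" shows "prec (u + v) (u' + v)"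
proof -
  have "\<forall>u u' v. prec u u' \<longrightarrow> prec (\<lambda>i. u i + v i) (\<lambda>i. u' i + v i)" using mto unfolding monomial_term_order_def by (elim conjE) assumption
  then have "prec (\<lambda>i. u i + v i) (\<lambda>i. u' i + v i)" using assms(1) by blast
  moreover have "(\<lambda>i. u i + v i) = u + v" "(\<lambda>i. u' i + v i) = u' + v" by (simp_all add: plus_fun_def)
  ultimately show ?thesis by simp
qed

lemma finite_min_prec:
  assumes "finite S" "S \<noteq> {}"
  shows "\<exists>m\<in>S. \<forall>v\<in>S. v \<noteq> m \<longrightarrow> prec m v"
  using assms
proof (induction S rule: finite_ne_induct)
  case (singleton x) then show ?case by simp
next
  case (insert x S)
  then obtain m where m: "m \<in> S" "\<forall>v\<in>S. v \<noteq> m \<longrightarrow> prec m v" by blast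
  show ?case
  proof (cases "prec x m")
    case True
    have "\<forall>v\<in>insert x S. v \<noteq> x \<longrightarrow> prec x v"
    proof (intro ballI impI)
      fix v assume "v \<in> insert x S" "v \<noteq> x"
      then have "v \<in> S" by simp
      show "prec x v"
      proof (cases "v = m")
        case True then show ?thesis using \<open>prec x m\<close> by (simp only:)
      next
        case False
        have "v \<noteq> m \<longrightarrow> prec m v" using m(2) \<open>v \<in> S\<close> by (rule bspec)
        then have "prec m v" using False by (rule mp)
        show ?thesis by (rule mto_trans[OF \<open>prec x m\<close> \<open>prec m v\<close>])
      qed
    qed
    then show ?thesis by (intro bexI[of _ x]) simp_all
  next
    case False
    have "x \<noteq> m" using m(1) insert.hyps by blast
    then have "prec x m \<or> prec m x" by (rule mto_tot)
    then have "prec m x" using False by simp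
    have "\<forall>v\<in>insert x S. v \<noteq> m \<longrightarrow> prec m v"
      using m(2) \<open>prec m x\<close> by simp
    then show ?thesis using m(1) by (intro bexI[of _ m]) simp_all
  qed
qed

lemma init_prec_prop:
  assumes "is_tpoly f" "\<exists>u. f u \<noteq> \<infinity>"
  shows "f (init_prec prec f) \<noteq> \<infinity> \<and> (\<forall>v. f v \<noteq> \<infinity> \<longrightarrow> v \<noteq> init_prec prec f \<longrightarrow> prec (init_prec prec f) v)"
proof -
  have fin: "finite {u. f u \<noteq> \<infinity>}" using assms(1) by (simp add: is_tpoly_def)
  obtain m where m: "m \<in> {u. f u \<noteq> \<infinity>}" "\<forall>v\<in>{u. f u \<noteq> \<infinity>}. v \<noteq> m \<longrightarrow> prec m v"
    using finite_min_prec[OF fin] assms(2) by blast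
  have "\<exists>!u. f u \<noteq> \<infinity> \<and> (\<forall>v. f v \<noteq> \<infinity> \<longrightarrow> v \<noteq> u \<longrightarrow> prec u v)"
  proof
    show "f m \<noteq> \<infinity> \<and> (\<forall>v. f v \<noteq> \<infinity> \<longrightarrow> v \<noteq> m \<longrightarrow> prec m v)" using m by auto
  next
    fix u assume u: "f u \<noteq> \<infinity> \<and> (\<forall>v. f v \<noteq> \<infinity> \<longrightarrow> v \<noteq> u \<longrightarrow> prec u v)"
    show "u = m"
    proof (rule ccontr)
      assume "u \<noteq> m"
      then have "prec u m" "prec m u" using u m by auto
      then show False using mto_irr mto_trans[of u m u] by blast
    qed
  qed
  then show ?thesis unfolding init_prec_def by (rule theI')
qed


end

lemma nat_seq_incsub:
  fixes t :: "nat \<Rightarrow> nat"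
  shows "\<exists>g. strict_mono g \<and> incseq (\<lambda>n. t (g n))"
proof -
  obtain g where g: "strict_mono g" "monoseq (\<lambda>n. t (g n))" using seq_monosub by blast
  show ?thesis
  proof (cases "incseq (\<lambda>n. t (g n))")
    case True then show ?thesis using g by blast
  next
    case False
    then have dec: "\<And>m n. m \<le> n \<Longrightarrow> t (g n) \<le> t (g m)"
      using g(2) False unfolding monoseq_def incseq_def by blast
    define k0 where "k0 = (LEAST k. \<exists>n. t (g n) = k)"
    have "\<exists>n. t (g n) = k0" unfolding k0_def by (rule LeastI_ex) blast
    then obtain N where N: "t (g N) = k0" by blast
    have low: "k0 \<le> t (g n)" for n unfolding k0_def by (rule Least_le) blast
    have const: "t (g (n + N)) = k0" for n using dec[of N "n + N"] low[of "n + N"] N by simp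
    have "strict_mono (\<lambda>n. g (n + N))" using g(1) unfolding strict_mono_def by simp
    moreover have "incseq (\<lambda>n. t (g (n + N)))" unfolding incseq_def using const by simp
    ultimately show ?thesis by blast
  qed
qed

lemma dickson_sub:
  fixes s :: "nat \<Rightarrow> ('n \<Rightarrow> nat)"
  assumes "finite K"
  shows "\<exists>f. strict_mono f \<and> (\<forall>k\<in>K. incseq (\<lambda>n. s (f n) k))"
  using assms
proof (induction K rule: finite_induct)
  case empty
  have "strict_mono (\<lambda>n::nat. n)" by (simp add: strict_mono_def)
  then show ?case by blast
next
  case (insert k K)
  then obtain f where f: "strict_mono f" "\<forall>k\<in>K. incseq (\<lambda>n. s (f n) k)" by blast
  obtain g where g: "strict_mono g" "incseq (\<lambda>n. s (f (g n)) k)"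
    using nat_seq_incsub[of "\<lambda>n. s (f n) k"] by blast
  have sm: "strict_mono (\<lambda>n. f (g n))" using f(1) g(1) unfolding strict_mono_def by simp
  have mg: "m \<le> n \<Longrightarrow> g m \<le> g n" for m n using g(1) by (simp add: strict_mono_less_eq)
  have "\<forall>k'\<in>K. incseq (\<lambda>n. s (f (g n)) k')"
  proof
    fix k' assume "k' \<in> K"
    then have "incseq (\<lambda>n. s (f n) k')" using f(2) by blast
    then show "incseq (\<lambda>n. s (f (g n)) k')" unfolding incseq_def
    proof (intro allI impI)
      fix m n :: nat assume H: "\<forall>m n. m \<le> n \<longrightarrow> s (f m) k' \<le> s (f n) k'" and "m \<le> n"
      have "g m \<le> g n" using \<open>m \<le> n\<close> by (rule mg)
      then show "s (f (g m)) k' \<le> s (f (g n)) k'" using H by blast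
    qed
  qed
  with g(2) sm show ?case by blast
qed

lemma dickson_seq:
  fixes s :: "nat \<Rightarrow> ('n::finite \<Rightarrow> nat)"
  shows "\<exists>i j. i < j \<and> s i \<le> s j"
proof -
  obtain f where f: "strict_mono f" "\<forall>k\<in>UNIV. incseq (\<lambda>n. s (f n) k)"
    using dickson_sub[of "UNIV :: 'n set" s] by auto
  have "f 0 < f 1" using f(1) unfolding strict_mono_def by simp
  moreover have "s (f 0) \<le> s (f 1)" using f(2) unfolding le_fun_def incseq_def by simp
  ultimately show ?thesis by blast
qed

lemma minimal_finite:
  fixes S :: "('n::finite \<Rightarrow> nat) set"
  shows "finite {u\<in>S. \<forall>v\<in>S. v \<le> u \<longrightarrow> v = u}"
proof (rule ccontr)
  let ?M = "{u\<in>S. \<forall>v\<in>S. v \<le> u \<longrightarrow> v = u}"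
  assume "infinite ?M"
  then obtain f :: "nat \<Rightarrow> _" where f: "inj f" "range f \<subseteq> ?M"
    using infinite_countable_subset by blast
  obtain i j where ij: "i < j" "f i \<le> f j" using dickson_seq by blast
  have "f i \<in> S" "f j \<in> ?M" using f(2) by auto
  then have "f i = f j" using ij(2) by blast
  then show False using f(1) ij(1) by (simp add: inj_eq)
qed

lemma tdeg_strict:
  fixes u v :: "'n::finite expo"
  assumes "v \<le> u" "v \<noteq> u"
  shows "tdeg v < tdeg u"
proof -
  obtain i where "v i \<noteq> u i" using assms(2) by (auto simp: fun_eq_iff)
  then have "v i < u i" using assms(1) by (simp add: le_fun_def le_neq_implies_less)
  then show ?thesis unfolding tdeg_def
    by (intro sum_strict_mono_ex1) (use assms(1) in \<open>auto simp: le_fun_def\<close>)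
qed

lemma minimal_below:
  fixes S :: "('n::finite \<Rightarrow> nat) set"
  assumes "u \<in> S"
  shows "\<exists>v\<in>S. v \<le> u \<and> (\<forall>v'\<in>S. v' \<le> v \<longrightarrow> v' = v)"
proof -
  obtain v where v: "v \<in> S \<and> v \<le> u" "\<forall>y. y \<in> S \<and> y \<le> u \<longrightarrow> tdeg v \<le> tdeg y"
    using ex_has_least_nat[of "\<lambda>v. v \<in> S \<and> v \<le> u" u tdeg] assms by blast
  have "\<forall>v'\<in>S. v' \<le> v \<longrightarrow> v' = v"
  proof (intro ballI impI)
    fix v' assume "v' \<in> S" "v' \<le> v"
    have "v' \<le> u" using \<open>v' \<le> v\<close> v(1) by (meson order_trans)
    then have "tdeg v \<le> tdeg v'" using v(2) \<open>v' \<in> S\<close> by blast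
    then show "v' = v" using tdeg_strict[OF \<open>v' \<le> v\<close>] by fastforce
  qed
  then show ?thesis using v(1) by blast
qed

lemma real_sep:
  fixes X Y :: "real set"
  assumes "finite X" "finite Y" "\<And>x y. x \<in> X \<Longrightarrow> y \<in> Y \<Longrightarrow> x < y"
  shows "\<exists>t. (\<forall>x\<in>X. x < t) \<and> (\<forall>y\<in>Y. t < y)"
proof (cases "X = {}")
  case True
  show ?thesis
  proof (cases "Y = {}")
    case True then show ?thesis using \<open>X = {}\<close> by simp
  next
    case False
    have "\<forall>y\<in>Y. Min Y - 1 < y" using Min_le[OF assms(2)] by fastforce
    then show ?thesis using \<open>X = {}\<close> by blast
  qed
next
  case False
  note XF = False
  show ?thesis
  proof (cases "Y = {}")
    case True
    have "\<forall>x\<in>X. x < Max X + 1" using Max_ge[OF assms(1)] by fastforce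
    then show ?thesis using True by blast
  next
    case False
    have "Max X \<in> X" "Min Y \<in> Y" using XF False assms(1,2) by auto
    then have lt: "Max X < Min Y" using assms(3) by blast
    have "\<forall>x\<in>X. x < (Max X + Min Y) / 2" using Max_ge[OF assms(1)] lt by fastforce
    moreover have "\<forall>y\<in>Y. (Max X + Min Y) / 2 < y" using Min_le[OF assms(2)] lt by fastforce
    ultimately show ?thesis by blast
  qed
qed

lemma fm_weight:
  fixes Pc :: "('n \<Rightarrow> int) set"
  assumes add: "\<And>a b. a \<in> Pc \<Longrightarrow> b \<in> Pc \<Longrightarrow> (\<lambda>i. a i + b i) \<in> Pc"
    and scal: "\<And>a (k::nat). a \<in> Pc \<Longrightarrow> k > 0 \<Longrightarrow> (\<lambda>i. int k * a i) \<in> Pc"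
    and nz: "(\<lambda>i. 0) \<notin> Pc"
    and K: "finite K"
  shows "finite A \<Longrightarrow> A \<subseteq> Pc \<Longrightarrow> (\<forall>a\<in>A. \<forall>i. i \<notin> K \<longrightarrow> a i = 0) \<Longrightarrow>
    \<exists>w::'n \<Rightarrow> real. \<forall>a\<in>A. (\<Sum>i\<in>K. real_of_int (a i) * w i) > 0"
  using K
proof (induction K arbitrary: A rule: finite_induct)
  case empty
  have "A = {}"
  proof (rule ccontr)
    assume "A \<noteq> {}"
    then obtain a where "a \<in> A" by blast
    then have "a = (\<lambda>i. 0)" using empty.prems(3) by auto
    then show False using \<open>a \<in> A\<close> empty.prems(2) nz by blast
  qed
  then show ?case by simp
next
  case (insert k K)
  define Z where "Z = {a\<in>A. a k = 0}"
  define Po where "Po = {a\<in>A. a k > 0}"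
  define Ne where "Ne = {a\<in>A. a k < 0}"
  define comb where "comb = (\<lambda>(a::'n \<Rightarrow> int, b::'n \<Rightarrow> int). (\<lambda>i. (- b k) * a i + a k * b i))"
  define A' where "A' = Z \<union> comb ` (Po \<times> Ne)"
  have finA: "finite A" by fact
  have fin': "finite A'" unfolding A'_def Z_def Po_def Ne_def using finA by auto
  have combP: "comb (a, b) \<in> Pc" if "a \<in> Po" "b \<in> Ne" for a b
  proof -
    have "a \<in> Pc" "b \<in> Pc" using that insert.prems(2) unfolding Po_def Ne_def by auto
    have n1: "nat (- b k) > 0" using that unfolding Ne_def by simp
    have n2: "nat (a k) > 0" using that unfolding Po_def by simp
    have "(\<lambda>i. int (nat (- b k)) * a i) \<in> Pc" by (rule scal[OF \<open>a \<in> Pc\<close> n1])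
    moreover have "(\<lambda>i. int (nat (a k)) * b i) \<in> Pc" by (rule scal[OF \<open>b \<in> Pc\<close> n2])
    ultimately have "(\<lambda>i. int (nat (- b k)) * a i + int (nat (a k)) * b i) \<in> Pc" by (rule add)
    moreover have "int (nat (- b k)) = - b k" "int (nat (a k)) = a k" using that unfolding Po_def Ne_def by auto
    ultimately show ?thesis unfolding comb_def by (simp only: prod.case)
  qed
  have sub': "A' \<subseteq> Pc" unfolding A'_def using combP insert.prems(2) unfolding Z_def by auto
  have supp': "\<forall>a\<in>A'. \<forall>i. i \<notin> K \<longrightarrow> a i = 0"
  proof (intro ballI allI impI)
    fix a i assume a: "a \<in> A'" and i: "i \<notin> K"
    show "a i = 0"
    proof (cases "i = k")
      case True
      show ?thesis using a unfolding A'_def Z_def comb_def True by (auto simp: algebra_simps)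
    next
      case False
      then have "i \<notin> insert k K" using i by simp
      then have z: "\<And>a. a \<in> A \<Longrightarrow> a i = 0" using insert.prems(3) by blast
      show ?thesis using a unfolding A'_def Z_def Po_def Ne_def comb_def by (auto simp: z)
    qed
  qed
  obtain w' where w': "\<forall>a\<in>A'. (\<Sum>i\<in>K. real_of_int (a i) * w' i) > 0"
    using insert.IH[OF fin' sub' supp'] by blast
  define L where "L = (\<lambda>a::'n \<Rightarrow> int. (\<Sum>i\<in>K. real_of_int (a i) * w' i))"
  have Lcomb: "L (comb (a, b)) = real_of_int (- b k) * L a + real_of_int (a k) * L b" for a b
  proof -
    have "L (comb (a, b)) = (\<Sum>i\<in>K. real_of_int (- b k) * (real_of_int (a i) * w' i) + real_of_int (a k) * (real_of_int (b i) * w' i))"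
      unfolding L_def comb_def by (intro sum.cong) (simp_all add: algebra_simps)
    also have "\<dots> = real_of_int (- b k) * L a + real_of_int (a k) * L b"
      unfolding L_def by (simp only: sum.distrib sum_distrib_left)
    finally show ?thesis .
  qed
  have LZ: "L a > 0" if "a \<in> Z" for a using w' that unfolding A'_def L_def by auto
  have LP: "real_of_int (- b k) * L a + real_of_int (a k) * L b > 0" if "a \<in> Po" "b \<in> Ne" for a b
  proof -
    have "comb (a, b) \<in> A'" unfolding A'_def using that by auto
    then have "L (comb (a, b)) > 0" using w' unfolding L_def by blast
    then show ?thesis using Lcomb by simp
  qed
  define X where "X = (\<lambda>a. - L a / real_of_int (a k)) ` Po"
  define Y where "Y = (\<lambda>b. L b / real_of_int (- b k)) ` Ne"
  have "\<exists>t. (\<forall>x\<in>X. x < t) \<and> (\<forall>y\<in>Y. t < y)"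
  proof (rule real_sep)
    show "finite X" "finite Y" unfolding X_def Y_def Po_def Ne_def using finA by auto
    fix x y assume "x \<in> X" "y \<in> Y"
    then obtain a b where ab: "a \<in> Po" "b \<in> Ne" "x = - L a / real_of_int (a k)" "y = L b / real_of_int (- b k)"
      unfolding X_def Y_def by blast
    have pa: "real_of_int (a k) > 0" and pb: "real_of_int (- b k) > 0" using ab(1,2) unfolding Po_def Ne_def by auto
    have "- L a * real_of_int (- b k) < L b * real_of_int (a k)" using LP[OF ab(1,2)] by (simp add: algebra_simps)
    then show "x < y" unfolding ab(3,4) using pa pb by (simp add: divide_simps)
  qed
  then obtain t where t: "\<forall>x\<in>X. x < t" "\<forall>y\<in>Y. t < y" by blast
  define w where "w = w'(k := t)"
  have split: "(\<Sum>i\<in>insert k K. real_of_int (a i) * w i) = real_of_int (a k) * t + L a" for a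
  proof -
    have "(\<Sum>i\<in>insert k K. real_of_int (a i) * w i) = real_of_int (a k) * w k + (\<Sum>i\<in>K. real_of_int (a i) * w i)"
      using insert.hyps by simp
    moreover have "(\<Sum>i\<in>K. real_of_int (a i) * w i) = L a"
      unfolding L_def w_def using insert.hyps by (intro sum.cong) auto
    ultimately show ?thesis unfolding w_def by simp
  qed
  have "\<forall>a\<in>A. (\<Sum>i\<in>insert k K. real_of_int (a i) * w i) > 0"
  proof
    fix a assume a: "a \<in> A"
    show "(\<Sum>i\<in>insert k K. real_of_int (a i) * w i) > 0"
    proof (cases "a k = 0")
      case True
      then have "a \<in> Z" unfolding Z_def using a by simp
      then show ?thesis using LZ True split by simp
    next
      case False
      show ?thesis
      proof (cases "a k > 0")
        case True
        then have "a \<in> Po" unfolding Po_def using a by simp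
        then have "- L a / real_of_int (a k) < t" using t(1) unfolding X_def by blast
        then have "- L a < t * real_of_int (a k)" using True by (simp add: divide_simps)
        then show ?thesis using split by (simp add: algebra_simps)
      next
        case False2: False
        then have "a k < 0" using False by simp
        then have "a \<in> Ne" unfolding Ne_def using a by simp
        then have "t < L a / real_of_int (- a k)" using t(2) unfolding Y_def by blast
        then have "t * real_of_int (- a k) < L a" using \<open>a k < 0\<close> by (simp add: divide_simps)
        then show ?thesis using split by (simp add: algebra_simps)
      qed
    qed
  qed
  then show ?case by blast
qed

lemma tdeg_add: "tdeg (a + b) = tdeg a + tdeg (b :: 'n::finite expo)"
  unfolding tdeg_def by (simp add: sum.distrib)

lemma wdot_add_u: "wdot (a + b) w = wdot a w + wdot b w"
  unfolding wdot_def by (simp add: sum.distrib algebra_simps)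

lemma wdot_add_w: "wdot u (x + y) = wdot u x + wdot u y"
  unfolding wdot_def by (simp add: sum.distrib algebra_simps)

lemma wdot_scale: "wdot u (c *\<^sub>R x) = c * wdot u x"
  unfolding wdot_def by (simp add: sum_distrib_left algebra_simps)

lemma inner_wdot: "(\<chi> i. real (u i) - real (s i)) \<bullet> w = wdot u w - wdot s w"
  unfolding wdot_def inner_vec_def by (simp add: sum_subtractf algebra_simps)

lemma finite_deg: "finite {y :: 'n::finite expo. tdeg y = d}"
proof -
  have "{y :: 'n expo. tdeg y = d} \<subseteq> PiE UNIV (\<lambda>_. {..d})"
  proof
    fix y :: "'n expo" assume "y \<in> {y. tdeg y = d}"
    then have "y i \<le> d" for i unfolding tdeg_def using member_le_sum[of i UNIV y] by auto
    then show "y \<in> PiE UNIV (\<lambda>_. {..d})" by (auto simp: PiE_def Pi_def extensional_def)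
  qed
  moreover have "finite (PiE (UNIV :: 'n set) (\<lambda>_. {..d}))" by (rule finite_PiE) auto
  ultimately show ?thesis by (rule finite_subset)
qed

lemma ereal_finite: "x \<noteq> \<infinity> \<Longrightarrow> x \<noteq> -\<infinity> \<Longrightarrow> \<exists>r. x = ereal r"
  by (cases x) auto

lemma fun_sub_add: "u \<le> m \<Longrightarrow> (m - u) + u = (m :: 'n expo)"
  by (simp add: le_fun_def fun_eq_iff)

lemma fun_add_sub: "(a + u) - a = (u :: 'n expo)"
  by (simp add: fun_eq_iff)

lemma fun_le_add: "a \<le> a + (u :: 'n expo)"
  by (simp add: le_fun_def)

context tctx
begin

lemma I_tideal: "tideal I"
  using trop unfolding homog_tropical_ideal_def homog_ideal_def by blast

lemma I_tpoly: "f \<in> I \<Longrightarrow> is_tpoly f"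
  using I_tideal unfolding tideal_def by blast

lemma I_add: "f \<in> I \<Longrightarrow> g \<in> I \<Longrightarrow> tadd f g \<in> I"
  using I_tideal unfolding tideal_def by blast

lemma I_mult: "f \<in> I \<Longrightarrow> is_tpoly g \<Longrightarrow> tmult g f \<in> I"
  using I_tideal unfolding tideal_def by blast

lemma I_hcomp: "f \<in> I \<Longrightarrow> hcomp d f \<in> I"
  using trop unfolding homog_tropical_ideal_def homog_ideal_def by blast

lemma I_zero: "zpoly \<in> I"
proof -
  obtain f where "f \<in> I" using I_tideal unfolding tideal_def by blast
  then have "tmult zpoly f \<in> I" using I_mult is_tpoly_zpoly by blast
  then show ?thesis using tmult_zpoly[OF I_tpoly[OF \<open>f \<in> I\<close>]] by simp
qed

lemma I_elim:
  assumes "f \<in> I" "g \<in> I" "homog_of_deg d f" "homog_of_deg d g" "f u = g u" "f u \<noteq> \<infinity>"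
  shows "\<exists>h\<in>I. h u = \<infinity> \<and> (\<forall>v. h v \<ge> min (f v) (g v) \<and> (f v \<noteq> g v \<longrightarrow> h v = min (f v) (g v)))"
proof -
  have "\<forall>f\<in>I. \<forall>g\<in>I. \<forall>d u. homog_of_deg d f \<and> homog_of_deg d g \<and> f u = g u \<and> f u \<noteq> \<infinity> \<longrightarrow>
       (\<exists>h\<in>I. h u = \<infinity> \<and> (\<forall>v. h v \<ge> min (f v) (g v) \<and> (f v \<noteq> g v \<longrightarrow> h v = min (f v) (g v))))"
    using trop unfolding homog_tropical_ideal_def by (elim conjE) assumption
  then show ?thesis using assms by blast
qed

definition Inits where "Inits = {init_prec prec f | f. f \<in> I \<and> (\<exists>u. f u \<noteq> \<infinity>)}"
definition Mset where "Mset = {v. \<exists>u\<in>Inits. u \<le> v}"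
definition Gens where "Gens = {u\<in>Inits. \<forall>v\<in>Inits. v \<le> u \<longrightarrow> v = u}"

lemma Mset_iff: "v \<in> Mset \<longleftrightarrow> (\<exists>f\<in>I. (\<exists>u. f u \<noteq> \<infinity>) \<and> (\<forall>i. init_prec prec f i \<le> v i))"
  unfolding Mset_def Inits_def le_fun_def by blast

lemma Gens_finite: "finite Gens"
  unfolding Gens_def by (rule minimal_finite)

lemma Mset_gen: "v \<in> Mset \<Longrightarrow> \<exists>u\<in>Gens. u \<le> v"
proof -
  assume "v \<in> Mset"
  then obtain u where u: "u \<in> Inits" "u \<le> v" unfolding Mset_def by blast
  obtain u' where u': "u' \<in> Inits" "u' \<le> u" "\<forall>v'\<in>Inits. v' \<le> u' \<longrightarrow> v' = u'"
    using minimal_below[OF u(1)] by blast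
  have "u' \<in> Gens" unfolding Gens_def using u' by blast
  moreover have "u' \<le> v" using u'(2) u(2) by (rule order_trans)
  ultimately show ?thesis by blast
qed

lemma Gens_Mset: "u \<in> Gens \<Longrightarrow> u \<in> Mset"
  unfolding Gens_def Mset_def by blast

lemma init_poly:
  assumes "u \<in> Inits"
  shows "\<exists>g. g \<in> I \<and> homog_of_deg (tdeg u) g \<and> g u \<noteq> \<infinity> \<and> (\<forall>s. g s \<noteq> \<infinity> \<longrightarrow> s \<noteq> u \<longrightarrow> prec u s)"
proof -
  obtain f where f: "f \<in> I" "\<exists>x. f x \<noteq> \<infinity>" "u = init_prec prec f" using assms unfolding Inits_def by blast
  have P: "f u \<noteq> \<infinity>" "\<forall>v. f v \<noteq> \<infinity> \<longrightarrow> v \<noteq> u \<longrightarrow> prec u v"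
    using init_prec_prop[OF I_tpoly[OF f(1)] f(2)] f(3) by auto
  let ?g = "hcomp (tdeg u) f"
  have "?g \<in> I" using I_hcomp[OF f(1)] .
  moreover have "homog_of_deg (tdeg u) ?g" unfolding homog_of_deg_def hcomp_def by simp
  moreover have "?g u \<noteq> \<infinity>" unfolding hcomp_def using P(1) by simp
  moreover have "\<forall>s. ?g s \<noteq> \<infinity> \<longrightarrow> s \<noteq> u \<longrightarrow> prec u s"
    unfolding hcomp_def using P(2) by simp
  ultimately show ?thesis by blast
qed

definition gg where "gg u = (SOME g. g \<in> I \<and> homog_of_deg (tdeg u) g \<and> g u \<noteq> \<infinity> \<and> (\<forall>s. g s \<noteq> \<infinity> \<longrightarrow> s \<noteq> u \<longrightarrow> prec u s))"

lemma gg_props: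
  assumes "u \<in> Gens"
  shows "gg u \<in> I" "homog_of_deg (tdeg u) (gg u)" "gg u u \<noteq> \<infinity>" "\<And>s. gg u s \<noteq> \<infinity> \<Longrightarrow> s \<noteq> u \<Longrightarrow> prec u s"
proof -
  have "u \<in> Inits" using assms unfolding Gens_def by blast
  from someI_ex[OF init_poly[OF this]]
  have "gg u \<in> I \<and> homog_of_deg (tdeg u) (gg u) \<and> gg u u \<noteq> \<infinity> \<and> (\<forall>s. gg u s \<noteq> \<infinity> \<longrightarrow> s \<noteq> u \<longrightarrow> prec u s)"
    unfolding gg_def .
  then show "gg u \<in> I" "homog_of_deg (tdeg u) (gg u)" "gg u u \<noteq> \<infinity>" "\<And>s. gg u s \<noteq> \<infinity> \<Longrightarrow> s \<noteq> u \<Longrightarrow> prec u s"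
    by blast+
qed

definition Pr where "Pr = Sigma Gens (\<lambda>u. {s. gg u s \<noteq> \<infinity> \<and> s \<noteq> u})"

lemma Pr_finite: "finite Pr"
  unfolding Pr_def
proof (rule finite_SigmaI[OF Gens_finite])
  fix u assume "u \<in> Gens"
  then have "finite {s. gg u s \<noteq> \<infinity>}" using I_tpoly[OF gg_props(1)] unfolding is_tpoly_def by blast
  then show "finite {s. gg u s \<noteq> \<infinity> \<and> s \<noteq> u}" by (rule finite_subset[rotated]) auto
qed

lemma Pr_prec: "p \<in> Pr \<Longrightarrow> prec (fst p) (snd p)"
  unfolding Pr_def using gg_props(4) by auto

definition Cset :: "(real^'n) set" where
  "Cset = {w. \<forall>p\<in>Pr. wdot (fst p) w + real_of_ereal (gg (fst p) (fst p)) + 1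
                       \<le> wdot (snd p) w + real_of_ereal (gg (fst p) (snd p))}"

lemma shift:
  fixes a :: "'n expo" and c :: real
  assumes u: "u \<in> Gens"
  defines "h \<equiv> tmult (mono c a) (gg u)"
  shows "h \<in> I" "h (a + u) = gg u u + ereal c"
    "\<And>x. h x \<noteq> \<infinity> \<Longrightarrow> tdeg x = tdeg a + tdeg u"
    "\<And>x. h x \<noteq> \<infinity> \<Longrightarrow> x \<noteq> a + u \<Longrightarrow> prec (a + u) x"
    "\<And>x. w \<in> Cset \<Longrightarrow> h x \<noteq> \<infinity> \<Longrightarrow> x \<noteq> a + u \<Longrightarrow> h (a + u) + ereal (wdot (a + u) w) < h x + ereal (wdot x w)"
proof -
  let ?g = "gg u"
  have gI: "?g \<in> I" and gT: "is_tpoly ?g" using gg_props(1)[OF u] I_tpoly by blast+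
  have hx: "h x = (if a \<le> x then ereal c + ?g (x - a) else \<infinity>)" for x
    unfolding h_def by (rule tmult_mono[OF gT])
  show "h \<in> I" unfolding h_def by (rule I_mult[OF gI is_tpoly_mono])
  show hm: "h (a + u) = ?g u + ereal c" using hx[of "a + u"] fun_le_add[of a u] fun_add_sub[of a u] by (simp add: add.commute)
  have dec: "a \<le> x \<and> ?g (x - a) \<noteq> \<infinity> \<and> x = a + (x - a)" if "h x \<noteq> \<infinity>" for x
  proof -
    have "a \<le> x" using that hx[of x] by (cases "a \<le> x") auto
    moreover have "?g (x - a) \<noteq> \<infinity>" using that hx[of x] \<open>a \<le> x\<close> by auto
    moreover have "x = a + (x - a)" using \<open>a \<le> x\<close> fun_sub_add[of a x] by (simp add: add.commute)
    ultimately show ?thesis by blast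
  qed
  show "tdeg x = tdeg a + tdeg u" if "h x \<noteq> \<infinity>" for x
  proof -
    have d: "a \<le> x" "?g (x - a) \<noteq> \<infinity>" "x = a + (x - a)" using dec[OF that] by blast+
    have "tdeg (x - a) = tdeg u" using gg_props(2)[OF u] d(2) unfolding homog_of_deg_def by blast
    then show ?thesis using tdeg_add[of a "x - a"] d(3) by simp
  qed
  show "prec (a + u) x" if "h x \<noteq> \<infinity>" "x \<noteq> a + u" for x
  proof -
    have d: "a \<le> x" "?g (x - a) \<noteq> \<infinity>" "x = a + (x - a)" using dec[OF that(1)] by blast+
    have "x - a \<noteq> u" using d(3) that(2) by metis
    then have "prec u (x - a)" using gg_props(4)[OF u d(2)] by blast
    then have "prec (u + a) ((x - a) + a)" by (rule mto_mult)
    then show ?thesis using d(3) by (simp add: add.commute)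
  qed
  show "h (a + u) + ereal (wdot (a + u) w) < h x + ereal (wdot x w)"
    if w: "w \<in> Cset" and "h x \<noteq> \<infinity>" "x \<noteq> a + u" for x
  proof -
    have d: "a \<le> x" "?g (x - a) \<noteq> \<infinity>" "x = a + (x - a)" using dec[OF that(2)] by blast+
    define s where "s = x - a"
    have sx: "x = a + s" using d(3) unfolding s_def .
    have "s \<noteq> u" using sx that(3) by metis
    have p: "(u, s) \<in> Pr" unfolding Pr_def using u d(2) \<open>s \<noteq> u\<close> s_def by auto
    have ineq: "wdot u w + real_of_ereal (?g u) + 1 \<le> wdot s w + real_of_ereal (?g s)"
      using w p unfolding Cset_def by fastforce
    obtain ru where ru: "?g u = ereal ru"
      using ereal_finite[OF gg_props(3)[OF u]] gT unfolding is_tpoly_def by blast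
    obtain rs where rs: "?g s = ereal rs"
      using ereal_finite[OF d(2)[folded s_def]] gT unfolding is_tpoly_def by blast
    have hxv: "h x = ereal c + ereal rs" using hx[of x] d(1) rs s_def by simp
    have "h (a + u) + ereal (wdot (a + u) w) = ereal (ru + c + wdot a w + wdot u w)"
      using hm ru wdot_add_u[of a u w] by simp
    also have "\<dots> < ereal (c + rs + wdot a w + wdot s w)" using ineq ru rs by simp
    also have "\<dots> = h x + ereal (wdot x w)" using hxv sx wdot_add_u[of a s w] by simp
    finally show ?thesis .
  qed
qed

end

context tctx
begin

lemma no_std:
  assumes w: "w \<in> Cset"
  shows "f \<in> I \<Longrightarrow> homog_of_deg d f \<Longrightarrow> v \<in> init_w w f \<Longrightarrow> v \<notin> Mset \<Longrightarrow> False"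
proof -
  define X where "X = (\<lambda>f :: 'n tpoly. {y. y \<in> Mset \<and> tdeg y = d \<and> (\<exists>m'. f m' \<noteq> \<infinity> \<and> m' \<in> Mset \<and> (m' = y \<or> prec m' y))})"
  have finX: "finite (X f)" for f
    by (rule finite_subset[OF _ finite_deg[of d]]) (auto simp: X_def)
  show "f \<in> I \<Longrightarrow> homog_of_deg d f \<Longrightarrow> v \<in> init_w w f \<Longrightarrow> v \<notin> Mset \<Longrightarrow> False"
  proof (induction "card (X f)" arbitrary: f rule: less_induct)
    case less
    note fI = less.prems(1) and fh = less.prems(2) and vin = less.prems(3) and vM = less.prems(4)
    have fT: "is_tpoly f" using I_tpoly[OF fI] .
    have fv: "f v \<noteq> \<infinity>" and vmin: "\<And>u'. f v + ereal (wdot v w) \<le> f u' + ereal (wdot u' w)"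
      using vin unfolding init_w_def by auto
    define NS where "NS = {m'. f m' \<noteq> \<infinity> \<and> m' \<in> Mset}"
    have finNS: "finite NS"
    proof -
      have "finite {u. f u \<noteq> \<infinity>}" using fT unfolding is_tpoly_def by blast
      then show ?thesis unfolding NS_def by (rule finite_subset[rotated]) auto
    qed
    have "NS \<noteq> {}"
    proof -
      have ex: "\<exists>u. f u \<noteq> \<infinity>" using fv by blast
      have "f (init_prec prec f) \<noteq> \<infinity>" using init_prec_prop[OF fT ex] by blast
      moreover have "init_prec prec f \<in> Mset" unfolding Mset_iff using fI ex by blast
      ultimately show ?thesis unfolding NS_def by blast
    qed
    obtain m where m: "m \<in> NS" "\<forall>y\<in>NS. y \<noteq> m \<longrightarrow> prec m y"
      using finite_min_prec[OF finNS \<open>NS \<noteq> {}\<close>] by blast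
    have fm: "f m \<noteq> \<infinity>" and mM: "m \<in> Mset" using m(1) unfolding NS_def by auto
    obtain u where u: "u \<in> Gens" "u \<le> m" using Mset_gen[OF mM] by blast
    define a where "a = m - u"
    have am: "a + u = m" unfolding a_def by (rule fun_sub_add[OF u(2)])
    obtain rf where rf: "f m = ereal rf" using ereal_finite[OF fm] fT unfolding is_tpoly_def by blast
    obtain ru where ru: "gg u u = ereal ru"
      using ereal_finite[OF gg_props(3)[OF u(1)]] I_tpoly[OF gg_props(1)[OF u(1)]] unfolding is_tpoly_def by blast
    define c where "c = rf - ru"
    define h where "h = tmult (mono c a) (gg u)"
    have hI: "h \<in> I" unfolding h_def by (rule shift(1)[OF u(1)])
    have hm: "h m = f m" using shift(2)[OF u(1), of c a] am ru rf unfolding h_def c_def by simp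
    have tdm: "tdeg m = d" using fh fm unfolding homog_of_deg_def by blast
    have hdeg: "tdeg x = d" if "h x \<noteq> \<infinity>" for x
      using shift(3)[OF u(1), of c a x] that tdeg_add[of a u] am tdm unfolding h_def by simp
    have hprec: "prec m x" if "h x \<noteq> \<infinity>" "x \<noteq> m" for x
      using shift(4)[OF u(1), of c a x] that am unfolding h_def by simp
    have hbig: "h m + ereal (wdot m w) < h x + ereal (wdot x w)" if "h x \<noteq> \<infinity>" "x \<noteq> m" for x
      using shift(5)[OF u(1), of w c a x] w that am unfolding h_def by simp
    have hh: "homog_of_deg d h" unfolding homog_of_deg_def using hdeg by blast
    obtain f' where f': "f' \<in> I" "f' m = \<infinity>"
      "\<And>x. f' x \<ge> min (f x) (h x)" "\<And>x. f x \<noteq> h x \<Longrightarrow> f' x = min (f x) (h x)"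
      using I_elim[OF fI hI fh hh hm[symmetric] fm] by blast
    have f'h: "homog_of_deg d f'"
      unfolding homog_of_deg_def
    proof (intro allI impI)
      fix x assume "f' x \<noteq> \<infinity>"
      then have "min (f x) (h x) \<noteq> \<infinity>" using f'(3)[of x] by (metis top_ereal_def top_unique)
      then have "f x \<noteq> \<infinity> \<or> h x \<noteq> \<infinity>" by auto
      then show "tdeg x = d" using fh hdeg unfolding homog_of_deg_def by blast
    qed
    define mu where "mu = f v + ereal (wdot v w)"
    have hge: "mu \<le> h x + ereal (wdot x w)" for x
    proof (cases "h x = \<infinity>")
      case True then show ?thesis by simp
    next
      case False
      show ?thesis
      proof (cases "x = m")
        case True then show ?thesis using vmin[of m] hm unfolding mu_def by simp
      next
        case False
        then have "h m + ereal (wdot m w) < h x + ereal (wdot x w)" using hbig \<open>h x \<noteq> \<infinity>\<close> by blast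
        then show ?thesis using vmin[of m] hm unfolding mu_def by simp
      qed
    qed
    have vm: "v \<noteq> m" using vM mM by blast
    have fvh: "f v < h v"
    proof (cases "h v = \<infinity>")
      case True then show ?thesis using fv by (simp add: less_top[symmetric] top_ereal_def)
    next
      case False
      have "h m + ereal (wdot m w) < h v + ereal (wdot v w)" using hbig[OF False vm] .
      then have "f v + ereal (wdot v w) < h v + ereal (wdot v w)" using vmin[of m] hm by simp
      then show ?thesis by (metis add_right_mono not_less)
    qed
    have f'v: "f' v = f v" using f'(4)[of v] fvh by simp
    have "v \<in> init_w w f'"
      unfolding init_w_def
    proof (intro CollectI conjI allI)
      show "f' v \<noteq> \<infinity>" using f'v fv by simp
      fix u'
      have "min (f u') (h u') + ereal (wdot u' w) \<le> f' u' + ereal (wdot u' w)"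
        using f'(3)[of u'] by (metis add_right_mono)
      moreover have "mu \<le> min (f u') (h u') + ereal (wdot u' w)"
      proof (cases "f u' \<le> h u'")
        case True then show ?thesis using vmin[of u'] unfolding mu_def by (simp add: min_def)
      next
        case False then show ?thesis using hge[of u'] by (simp add: min_def)
      qed
      ultimately show "f' v + ereal (wdot v w) \<le> f' u' + ereal (wdot u' w)"
        using f'v unfolding mu_def by simp
    qed
    have NS'prec: "prec m y" if "f' y \<noteq> \<infinity>" "y \<in> Mset" for y
    proof -
      have ym: "y \<noteq> m" using that f'(2) by blast
      have "min (f y) (h y) \<noteq> \<infinity>" using f'(3)[of y] that(1) by (metis top_ereal_def top_unique)
      then have "f y \<noteq> \<infinity> \<or> h y \<noteq> \<infinity>" by auto
      then show ?thesis
      proof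
        assume "f y \<noteq> \<infinity>"
        then have "y \<in> NS" unfolding NS_def using that(2) by blast
        then show ?thesis using m(2) ym by blast
      next
        assume "h y \<noteq> \<infinity>"
        then show ?thesis using hprec ym by blast
      qed
    qed
    have sub: "X f' \<subseteq> X f"
    proof
      fix y assume "y \<in> X f'"
      then obtain m' where y: "y \<in> Mset" "tdeg y = d" "f' m' \<noteq> \<infinity>" "m' \<in> Mset" "m' = y \<or> prec m' y"
        unfolding X_def by blast
      have "prec m m'" using NS'prec[OF y(3) y(4)] .
      then have "prec m y" using y(5) mto_trans[of m m' y] by blast
      then show "y \<in> X f" unfolding X_def using y(1,2) fm mM by blast
    qed
    have mX: "m \<in> X f" unfolding X_def using mM tdm fm by blast
    have mX': "m \<notin> X f'"
    proof
      assume "m \<in> X f'"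
      then obtain m' where y: "f' m' \<noteq> \<infinity>" "m' \<in> Mset" "m' = m \<or> prec m' m"
        unfolding X_def by blast
      have "prec m m'" using NS'prec[OF y(1) y(2)] .
      then show False using y(3) mto_irr[of m] mto_trans[of m m' m] by blast
    qed
    have "card (X f') < card (X f)"
      by (rule psubset_card_mono[OF finX]) (use sub mX mX' in blast)
    then show False using less.hyps f'(1) f'h \<open>v \<in> init_w w f'\<close> vM by blast
  qed
qed

end

context tctx
begin

lemma std_in_M:
  assumes w: "w \<in> Cset" and fI: "f \<in> I" and v: "v \<in> init_w w f"
  shows "v \<in> Mset"
proof (rule ccontr)
  assume vM: "v \<notin> Mset"
  let ?g = "hcomp (tdeg v) f"
  have "?g \<in> I" by (rule I_hcomp[OF fI])
  moreover have "homog_of_deg (tdeg v) ?g" unfolding homog_of_deg_def hcomp_def by simp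
  moreover have "v \<in> init_w w ?g"
  proof -
    have fv: "f v \<noteq> \<infinity>" and vmin: "\<And>u'. f v + ereal (wdot v w) \<le> f u' + ereal (wdot u' w)"
      using v unfolding init_w_def by auto
    have "?g v + ereal (wdot v w) \<le> ?g u' + ereal (wdot u' w)" for u'
      using vmin[of u'] unfolding hcomp_def by auto
    then show ?thesis using fv unfolding init_w_def hcomp_def by auto
  qed
  ultimately show False using no_std[OF w] vM by blast
qed

lemma single_poly:
  assumes w: "w \<in> Cset" and vM: "v \<in> Mset"
  shows "\<exists>h\<in>I. h v = ereal (- wdot v w) \<and> (\<forall>x. x \<noteq> v \<longrightarrow> ereal (- wdot x w) < h x)"
proof -
  obtain u where u: "u \<in> Gens" "u \<le> v" using Mset_gen[OF vM] by blast
  define a where "a = v - u"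
  have av: "a + u = v" unfolding a_def by (rule fun_sub_add[OF u(2)])
  obtain ru where ru: "gg u u = ereal ru"
    using ereal_finite[OF gg_props(3)[OF u(1)]] I_tpoly[OF gg_props(1)[OF u(1)]] unfolding is_tpoly_def by blast
  define c where "c = - wdot v w - ru"
  define h where "h = tmult (mono c a) (gg u)"
  have hI: "h \<in> I" unfolding h_def by (rule shift(1)[OF u(1)])
  have hv: "h v = ereal (- wdot v w)" using shift(2)[OF u(1), of c a] av ru unfolding h_def c_def by simp
  have "ereal (- wdot x w) < h x" if "x \<noteq> v" for x
  proof (cases "h x = \<infinity>")
    case True then show ?thesis by simp
  next
    case False
    have "h v + ereal (wdot v w) < h x + ereal (wdot x w)"
      using shift(5)[OF u(1), of w c a x] w False that av unfolding h_def by simp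
    then have "0 < h x + ereal (wdot x w)" using hv by (simp add: zero_ereal_def)
    then show ?thesis using False by (cases "h x") auto
  qed
  then show ?thesis using hI hv by blast
qed

lemma multi_poly:
  assumes w: "w \<in> Cset"
  shows "finite S \<Longrightarrow> S \<subseteq> Mset \<Longrightarrow> \<exists>F\<in>I. \<forall>x. (x \<in> S \<longrightarrow> F x = ereal (- wdot x w)) \<and> (x \<notin> S \<longrightarrow> ereal (- wdot x w) < F x)"
proof (induction S rule: finite_induct)
  case empty
  have "\<forall>x. ereal (- wdot x w) < zpoly x" unfolding zpoly_def by simp
  then show ?case using I_zero by blast
next
  case (insert v S)
  then obtain F where F: "F \<in> I" "\<And>x. x \<in> S \<Longrightarrow> F x = ereal (- wdot x w)" "\<And>x. x \<notin> S \<Longrightarrow> ereal (- wdot x w) < F x"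
    by blast
  obtain h where h: "h \<in> I" "h v = ereal (- wdot v w)" "\<And>x. x \<noteq> v \<Longrightarrow> ereal (- wdot x w) < h x"
    using single_poly[OF w] insert.prems by blast
  have "tadd F h \<in> I" by (rule I_add[OF F(1) h(1)])
  moreover have "\<forall>x. (x \<in> insert v S \<longrightarrow> tadd F h x = ereal (- wdot x w)) \<and> (x \<notin> insert v S \<longrightarrow> ereal (- wdot x w) < tadd F h x)"
  proof (intro allI conjI impI)
    fix x assume "x \<in> insert v S"
    then show "tadd F h x = ereal (- wdot x w)"
    proof
      assume "x = v"
      have "\<not> F v \<le> ereal (- wdot v w)" using F(3)[of v] insert.hyps(2) by simp
      then show ?thesis using h(2) \<open>x = v\<close> unfolding tadd_def by (simp add: min_def)
    next
      assume "x \<in> S"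
      then have "x \<noteq> v" using insert.hyps(2) by blast
      then have "ereal (- wdot x w) \<le> h x" using h(3)[of x] by simp
      then show ?thesis using F(2)[OF \<open>x \<in> S\<close>] unfolding tadd_def by (simp add: min_def)
    qed
  next
    fix x assume "x \<notin> insert v S"
    then show "ereal (- wdot x w) < tadd F h x" using F(3)[of x] h(3)[of x] unfolding tadd_def by simp
  qed
  ultimately show ?case by blast
qed

lemma main_eq:
  assumes w: "w \<in> Cset"
  shows "init_w_ideal w I = init_prec_ideal prec I"
proof
  show "init_w_ideal w I \<subseteq> init_prec_ideal prec I"
  proof
    fix S assume "S \<in> init_w_ideal w I"
    then obtain f where f: "f \<in> I" "S = init_w w f" unfolding init_w_ideal_def by blast
    have "finite {u. f u \<noteq> \<infinity>}" using I_tpoly[OF f(1)] unfolding is_tpoly_def by blast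
    moreover have "S \<subseteq> {u. f u \<noteq> \<infinity>}" unfolding f(2) init_w_def by blast
    ultimately have "finite S" by (rule finite_subset[rotated])
    moreover have "\<forall>v\<in>S. v \<in> Mset" using std_in_M[OF w f(1)] f(2) by blast
    ultimately show "S \<in> init_prec_ideal prec I" unfolding init_prec_ideal_def Mset_iff by blast
  qed
next
  show "init_prec_ideal prec I \<subseteq> init_w_ideal w I"
  proof
    fix S assume "S \<in> init_prec_ideal prec I"
    then have finS: "finite S" and SM: "S \<subseteq> Mset" unfolding init_prec_ideal_def by (auto simp: Mset_iff)
    show "S \<in> init_w_ideal w I"
    proof (cases "S = {}")
      case True
      have "init_w w zpoly = {}" unfolding init_w_def zpoly_def by simp
      then show ?thesis using True I_zero unfolding init_w_ideal_def by blast
    next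
      case False
      then obtain v0 where v0: "v0 \<in> S" by blast
      obtain F where F: "F \<in> I" "\<And>x. x \<in> S \<Longrightarrow> F x = ereal (- wdot x w)" "\<And>x. x \<notin> S \<Longrightarrow> ereal (- wdot x w) < F x"
        using multi_poly[OF w finS SM] by blast
      have ge: "0 \<le> F x + ereal (wdot x w)" for x
      proof (cases "x \<in> S")
        case True then show ?thesis using F(2) by simp
      next
        case False
        then have "ereal (- wdot x w) < F x" by (rule F(3))
        then show ?thesis by (cases "F x") auto
      qed
      have "init_w w F = S"
      proof
        show "init_w w F \<subseteq> S"
        proof
          fix x assume "x \<in> init_w w F"
          then have xm: "F x + ereal (wdot x w) \<le> F v0 + ereal (wdot v0 w)" unfolding init_w_def by blast
          show "x \<in> S"
          proof (rule ccontr)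
            assume "x \<notin> S"
            then have "ereal (- wdot x w) < F x" by (rule F(3))
            then have "0 < F x + ereal (wdot x w)" by (cases "F x") auto
            then show False using xm F(2)[OF v0] by (simp add: zero_ereal_def)
          qed
        qed
        show "S \<subseteq> init_w w F"
        proof
          fix x assume "x \<in> S"
          then have "F x = ereal (- wdot x w)" by (rule F(2))
          then show "x \<in> init_w w F" unfolding init_w_def using ge by (simp add: zero_ereal_def)
        qed
      qed
      then show ?thesis using F(1) unfolding init_w_ideal_def by blast
    qed
  qed
qed

end

context tctx
begin

lemma scal_Pc:
  fixes Pc :: "('n \<Rightarrow> int) set"
  assumes add: "\<And>a b. a \<in> Pc \<Longrightarrow> b \<in> Pc \<Longrightarrow> (\<lambda>i. a i + b i) \<in> Pc"
  shows "a \<in> Pc \<Longrightarrow> (\<lambda>i. int (Suc n) * a i) \<in> Pc"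
proof (induction n)
  case 0 then show ?case by simp
next
  case (Suc n)
  have "(\<lambda>i. int (Suc n) * a i + a i) \<in> Pc" using add[OF Suc.IH[OF Suc.prems] Suc.prems] .
  moreover have "(\<lambda>i. int (Suc n) * a i + a i) = (\<lambda>i. int (Suc (Suc n)) * a i)" by (simp add: algebra_simps)
  ultimately show ?case by simp
qed

lemma weight_exists: "\<exists>w0::real^'n. \<forall>p\<in>Pr. wdot (fst p) w0 < wdot (snd p) w0"
proof -
  define Pc where "Pc = {a :: 'n \<Rightarrow> int. \<exists>u s. prec u s \<and> (\<forall>i. a i = int (s i) - int (u i))}"
  have add: "(\<lambda>i. a i + b i) \<in> Pc" if aP: "a \<in> Pc" and bP: "b \<in> Pc" for a b
  proof -
    obtain u s where us: "prec u s" "\<forall>i. a i = int (s i) - int (u i)" using aP unfolding Pc_def by blast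
    obtain u' s' where us': "prec u' s'" "\<forall>i. b i = int (s' i) - int (u' i)" using bP unfolding Pc_def by blast
    have p1: "prec (u + u') (s + u')" using us(1) by (rule mto_mult)
    have "prec (u' + s) (s' + s)" using us'(1) by (rule mto_mult)
    then have p2: "prec (s + u') (s + s')" by (simp add: add.commute)
    have "prec (u + u') (s + s')" using mto_trans[OF p1 p2] .
    moreover have "\<forall>i. a i + b i = int ((s + s') i) - int ((u + u') i)" using us(2) us'(2) by simp
    ultimately show ?thesis unfolding Pc_def by blast
  qed
  have scal: "(\<lambda>i. int k * a i) \<in> Pc" if aP: "a \<in> Pc" and kP: "k > 0" for a k
  proof -
    obtain n where "k = Suc n" using kP by (cases k) auto
    have "(\<lambda>i. int (Suc n) * a i) \<in> Pc" by (rule scal_Pc[of Pc a n, OF add aP])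
    then show ?thesis using \<open>k = Suc n\<close> by simp
  qed
  have nz: "(\<lambda>i. 0) \<notin> Pc"
  proof
    assume "(\<lambda>i. 0) \<in> Pc"
    then obtain u s where us: "prec u s" "\<forall>i. (0::int) = int (s i) - int (u i)" unfolding Pc_def by blast
    then have "s = u" by (simp add: fun_eq_iff)
    then show False using us(1) mto_irr by simp
  qed
  define A where "A = (\<lambda>p. \<lambda>i. int (snd p i) - int (fst p i)) ` Pr"
  have finA: "finite A" unfolding A_def using Pr_finite by simp
  have subA: "A \<subseteq> Pc" unfolding A_def Pc_def using Pr_prec by fastforce
  have fU: "finite (UNIV :: 'n set)" by simp
  have supA: "\<forall>a\<in>A. \<forall>i. i \<notin> (UNIV :: 'n set) \<longrightarrow> a i = 0" by simp
  obtain w :: "'n \<Rightarrow> real" where w: "\<forall>a\<in>A. (\<Sum>i\<in>UNIV. real_of_int (a i) * w i) > 0"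
    using fm_weight[of Pc UNIV A, OF add scal nz fU finA subA supA] by blast
  define w0 :: "real^'n" where "w0 = (\<chi> i. w i)"
  have "wdot (fst p) w0 < wdot (snd p) w0" if "p \<in> Pr" for p
  proof -
    have "(\<Sum>i\<in>UNIV. real_of_int (int (snd p i) - int (fst p i)) * w i) > 0"
      using w that unfolding A_def by auto
    moreover have "(\<Sum>i\<in>UNIV. real_of_int (int (snd p i) - int (fst p i)) * w i) = wdot (snd p) w0 - wdot (fst p) w0"
      unfolding wdot_def w0_def by (simp add: sum_subtractf algebra_simps)
    ultimately show ?thesis by simp
  qed
  then show ?thesis by blast
qed

definition cst where "cst p = real_of_ereal (gg (fst p) (fst p)) + 1 - real_of_ereal (gg (fst p) (snd p))"

lemma Cset_alt: "Cset = {w. \<forall>p\<in>Pr. cst p \<le> wdot (snd p) w - wdot (fst p) w}"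
  unfolding Cset_def cst_def by (intro Collect_cong ball_cong refl) linarith

lemma Cset_poly: "polyhedron Cset"
proof -
  define H where "H = (\<lambda>p. {w :: real^'n. (\<chi> i. real (fst p i) - real (snd p i)) \<bullet> w \<le> - cst p})"
  have Hp: "H p = {w. cst p \<le> wdot (snd p) w - wdot (fst p) w}" for p
    unfolding H_def by (auto simp: inner_wdot)
  have "Cset = \<Inter> (H ` Pr)" unfolding Cset_alt Hp by auto
  moreover have "polyhedron (\<Inter> (H ` Pr))"
    by (rule polyhedron_Inter) (use Pr_finite in \<open>auto simp: H_def polyhedron_halfspace_le\<close>)
  ultimately show ?thesis by simp
qed

lemma Cset_nonempty: "Cset \<noteq> {}"
proof -
  obtain w0 :: "real^'n" where w0: "\<forall>p\<in>Pr. wdot (fst p) w0 < wdot (snd p) w0" using weight_exists by blast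
  define gap where "gap p = wdot (snd p) w0 - wdot (fst p) w0" for p
  have gp: "gap p > 0" if "p \<in> Pr" for p using w0 that unfolding gap_def by auto
  define t where "t = (\<Sum>p\<in>Pr. \<bar>cst p\<bar> / gap p)"
  have "t *\<^sub>R w0 \<in> Cset"
    unfolding Cset_alt
  proof (intro CollectI ballI)
    fix p assume p: "p \<in> Pr"
    have nn: "0 \<le> \<bar>cst q\<bar> / gap q" if "q \<in> Pr - {p}" for q
    proof -
      have "gap q > 0" using gp that by blast
      then show ?thesis by (intro divide_nonneg_pos) auto
    qed
    have "\<bar>cst p\<bar> / gap p \<le> t" unfolding t_def
      by (rule member_le_sum[OF p nn Pr_finite])
    then have "\<bar>cst p\<bar> / gap p * gap p \<le> t * gap p" using gp[OF p] by (rule mult_right_mono[OF _ less_imp_le])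
    then have "\<bar>cst p\<bar> \<le> t * gap p" using gp[OF p] by simp
    then show "cst p \<le> wdot (snd p) (t *\<^sub>R w0) - wdot (fst p) (t *\<^sub>R w0)"
      unfolding wdot_scale gap_def by (simp add: algebra_simps)
  qed
  then show ?thesis by blast
qed

lemma Cset_rec: "aff_dim (recession_cone Cset) = int CARD('n)"
proof -
  obtain w0 :: "real^'n" where w0: "\<forall>p\<in>Pr. wdot (fst p) w0 < wdot (snd p) w0" using weight_exists by blast
  define D where "D = {d :: real^'n. \<forall>p\<in>Pr. wdot (fst p) d \<le> wdot (snd p) d}"
  define Op where "Op = {d :: real^'n. \<forall>p\<in>Pr. wdot (fst p) d < wdot (snd p) d}"
  have coneD: "cone D" unfolding cone_def
  proof (intro ballI allI impI)
    fix x :: "real^'n" and c :: real assume x: "x \<in> D" and c: "0 \<le> c"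
    have "wdot (fst p) (c *\<^sub>R x) \<le> wdot (snd p) (c *\<^sub>R x)" if "p \<in> Pr" for p
      using x that c unfolding D_def wdot_scale by (simp add: mult_left_mono)
    then show "c *\<^sub>R x \<in> D" unfolding D_def by blast
  qed
  have transD: "\<forall>x\<in>Cset. \<forall>c\<in>D. x + c \<in> Cset"
  proof (intro ballI)
    fix x c assume x: "x \<in> Cset" and c: "c \<in> D"
    have "cst p \<le> wdot (snd p) (x + c) - wdot (fst p) (x + c)" if "p \<in> Pr" for p
    proof -
      have "cst p \<le> wdot (snd p) x - wdot (fst p) x" using x that unfolding Cset_alt by blast
      moreover have "wdot (fst p) c \<le> wdot (snd p) c" using c that unfolding D_def by blast
      ultimately show ?thesis unfolding wdot_add_w by simp
    qed
    then show "x + c \<in> Cset" unfolding Cset_alt by blast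
  qed
  have "D \<subseteq> recession_cone Cset" unfolding recession_cone_def using coneD transD by blast
  moreover have "Op \<subseteq> D" unfolding Op_def D_def by auto
  ultimately have OR: "Op \<subseteq> recession_cone Cset" by blast
  have "Op = \<Inter> ((\<lambda>p. {d. (\<chi> i. real (fst p i) - real (snd p i)) \<bullet> d < 0}) ` Pr)"
    unfolding Op_def by (auto simp: inner_wdot)
  moreover have "open (\<Inter> ((\<lambda>p. {d :: real^'n. (\<chi> i. real (fst p i) - real (snd p i)) \<bullet> d < 0}) ` Pr))"
    by (rule open_Inter) (use Pr_finite in \<open>auto simp: open_halfspace_lt\<close>)
  ultimately have "open Op" by simp
  moreover have "Op \<noteq> {}" using w0 unfolding Op_def by blast
  ultimately have "aff_dim Op = int DIM(real^'n)" by (rule aff_dim_open)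
  then have "aff_dim Op = int CARD('n)" by simp
  moreover have "aff_dim Op \<le> aff_dim (recession_cone Cset)" by (rule aff_dim_subset[OF OR])
  moreover have "aff_dim (recession_cone Cset) \<le> int DIM(real^'n)" by (rule aff_dim_le_DIM)
  ultimately show ?thesis by simp
qed

end

theorem lemma2p7:
  fixes I :: "('n::finite) tpoly set"
    and prec :: "'n expo \<Rightarrow> 'n expo \<Rightarrow> bool"
  assumes "homog_tropical_ideal I"
    and "monomial_term_order prec"
  shows "\<exists>C :: (real^'n) set. polyhedron C \<and> C \<noteq> {}
           \<and> aff_dim (recession_cone C) = int CARD('n)
           \<and> (\<forall>w \<in> interior C. init_w_ideal w I = init_prec_ideal prec I)"
proof -
  interpret tctx I prec using assms by unfold_locales
  have "\<forall>w \<in> interior Cset. init_w_ideal w I = init_prec_ideal prec I"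
    using main_eq interior_subset by blast
  then show ?thesis using Cset_poly Cset_nonempty Cset_rec by blast
qed

end
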